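(* Let $P_n\in\Pi_{n,d}$. Then for any $r>0$ and any direction $\boldsymbol{\mu}\in\mathbb{R}^d$ with $|\boldsymbol{\mu}|=1$, \[ \left|\frac{\partial^2P_n(\mathbf{x})}{\partial\boldsymbol{\mu}^2}\right|\le\left(\frac{8|\mathbf{x}|}{r}\right)^n\frac{8n(n-1)}{r^2}\|P_n\|_{L_\infty(B(r))},\quad |\mathbf{x}|\ge r/4. \]
   Context: $|\cdot|$ is the Euclidean norm, $B(r):=\{\mathbf{x}\in\mathbb{R}^d:|\mathbf{x}|\le r\}$, $\Pi_{n,d}$ is the space of real polynomials of total degree $\le n$ in $d$ variables, and $\frac{\partial^2}{\partial\boldsymbol{\mu}^2}$ denotes the second directional derivative in direction $\boldsymbol{\mu}$. *)

theory Defs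
  imports "HOL-Analysis.Analysis"
begin

definition poly_deg_le :: "nat \<Rightarrow> (real^'d \<Rightarrow> real) \<Rightarrow> bool" where
  "poly_deg_le n p \<longleftrightarrow>
     (\<exists>c :: ('d \<Rightarrow> nat) \<Rightarrow> real. \<forall>x.
        p x = (\<Sum>\<alpha>\<in>{\<alpha>. (\<Sum>i\<in>UNIV. \<alpha> i) \<le> n}. c \<alpha> * (\<Prod>i\<in>UNIV. (x $ i) ^ \<alpha> i)))"

definition dir_deriv2 :: "(real^'d \<Rightarrow> real) \<Rightarrow> real^'d \<Rightarrow> real^'d \<Rightarrow> real" where
  "dir_deriv2 p \<mu> x = deriv (\<lambda>s. deriv (\<lambda>t. p (x + t *\<^sub>R \<mu>)) s) 0"

definition sup_norm_ball :: "(real^'d \<Rightarrow> real) \<Rightarrow> real \<Rightarrow> real" where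
  "sup_norm_ball p r = (SUP y\<in>cball 0 r. \<bar>p y\<bar>)"

end

theory Submission
  imports Defs "HOL-Computational_Algebra.Polynomial"
begin


fun cheb :: "nat \<Rightarrow> real poly" where
  "cheb 0 = 1"
| "cheb (Suc 0) = [:0,1:]"
| "cheb (Suc (Suc n)) = [:0,2:] * cheb (Suc n) - cheb n"

lemma cheb_degree: "degree (cheb n) \<le> n"
proof (induction n rule: cheb.induct)
  case (3 n)
  have "degree ([:0,2:] * cheb (Suc n)) \<le> Suc (Suc n)"
    using degree_mult_le[of "[:0,2::real:]" "cheb (Suc n)"] 3(1) by simp
  moreover have "degree (cheb n) \<le> Suc (Suc n)" using 3(2) by simp
  ultimately show ?case using degree_diff_le by (simp add: degree_diff_le)
qed auto

lemma cheb_cos: "poly (cheb n) (cos th) = cos (real n * th)"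
proof (induction n rule: cheb.induct)
  case (3 n)
  have "cos (real (Suc (Suc n)) * th) = 2 * cos th * cos (real (Suc n) * th) - cos (real n * th)"
  proof -
    have a: "real (Suc (Suc n)) * th = real (Suc n) * th + th" by (simp add: algebra_simps)
    have b: "real n * th = real (Suc n) * th - th" by (simp add: algebra_simps)
    show ?thesis unfolding a b cos_add cos_diff by (simp add: algebra_simps)
  qed
  then show ?case using 3 by simp
qed auto

lemma cheb_one: "poly (cheb n) 1 = 1"
  using cheb_cos[of n 0] by simp

lemma cheb_ge1: "t \<ge> 1 \<Longrightarrow> 1 \<le> poly (cheb n) t \<and> poly (cheb n) t \<le> poly (cheb (Suc n)) t"
proof (induction n)
  case 0 then show ?case by simp
next
  case (Suc n)
  then show ?case by (simp add: algebra_simps) (smt (verit, best) mult_le_cancel_right1)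
qed

lemma cheb_le: "t \<ge> 1 \<Longrightarrow> poly (cheb n) t \<le> (2*t)^n"
proof (induction n rule: cheb.induct)
  case (3 n)
  have "poly (cheb (Suc (Suc n))) t = 2 * t * poly (cheb (Suc n)) t - poly (cheb n) t" by simp
  also have "\<dots> \<le> 2 * t * poly (cheb (Suc n)) t" using cheb_ge1[OF 3(3), of n] by simp
  also have "\<dots> \<le> 2 * t * (2*t)^(Suc n)" using 3 by (intro mult_left_mono) auto
  finally show ?case by simp
qed auto

lemma cheb_deriv1: "poly (pderiv (cheb n)) 1 = real n ^ 2"
proof (induction n rule: cheb.induct)
  case (3 n)
  then show ?case by (simp add: pderiv_mult pderiv_pCons pderiv_diff pderiv_smult cheb_one power2_eq_square algebra_simps)
qed (auto simp: pderiv_pCons)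



definition eta :: "nat \<Rightarrow> nat \<Rightarrow> real" where
  "eta n j = cos (real j * pi / real n)"

lemma eta_mono:
  assumes "n \<ge> 1" "j < k" "k \<le> n" shows "eta n k < eta n j"
proof -
  have n: "real n > 0" using assms by simp
  have "real j * pi / real n < real k * pi / real n"
    using assms n by (intro divide_strict_right_mono) auto
  moreover have "real k * pi / real n \<le> pi" using assms n by (simp add: field_simps)
  moreover have "0 \<le> real j * pi / real n" using n by simp
  ultimately show ?thesis unfolding eta_def
    by (subst cos_mono_less_eq) auto
qed

lemma eta_inj: "n \<ge> 1 \<Longrightarrow> j \<le> n \<Longrightarrow> k \<le> n \<Longrightarrow> eta n j = eta n k \<Longrightarrow> j = k"
proof (rule ccontr)
  assume a: "n \<ge> 1" "j \<le> n" "k \<le> n" "eta n j = eta n k" "j \<noteq> k"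
  show False
  proof (cases "j < k")
    case True then show ?thesis using eta_mono[OF a(1) True a(3)] a(4) by simp
  next
    case False then have "k < j" using a(5) by simp
    then show ?thesis using eta_mono[OF a(1) _ a(2), of k] a(4) by simp
  qed
qed

lemma eta_0: "eta n 0 = 1" by (simp add: eta_def)
lemma eta_bnd: "\<bar>eta n j\<bar> \<le> 1" by (simp add: eta_def)

lemma cheb_eta: "n \<ge> 1 \<Longrightarrow> poly (cheb n) (eta n j) = (-1)^j"
proof -
  assume "n \<ge> 1"
  then have "real n * (real j * pi / real n) = real j * pi" by simp
  then show ?thesis unfolding eta_def cheb_cos by simp
qed

definition lagf :: "nat \<Rightarrow> nat \<Rightarrow> real \<Rightarrow> real" where
  "lagf n j t = (\<Prod>k\<in>{0..n}-{j}. (t - eta n k) / (eta n j - eta n k))"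

definition lagp :: "nat \<Rightarrow> nat \<Rightarrow> real poly" where
  "lagp n j = (\<Prod>k\<in>{0..n}-{j}. smult (1 / (eta n j - eta n k)) [:- eta n k, 1:])"

lemma poly_lagp: "poly (lagp n j) t = lagf n j t"
  unfolding lagp_def lagf_def poly_prod by (intro prod.cong refl) (simp add: diff_divide_distrib)

lemma degree_lagp: assumes "j \<le> n" shows "degree (lagp n j) \<le> n"
proof -
  have "degree (lagp n j) \<le> sum (degree \<circ> (\<lambda>k. smult (1 / (eta n j - eta n k)) [:- eta n k, 1:])) ({0..n}-{j})"
    unfolding lagp_def by (rule degree_prod_sum_le) auto
  also have "\<dots> \<le> sum (\<lambda>_. 1) ({0..n}-{j})"
    by (intro sum_mono) (auto intro: order.trans[OF degree_smult_le])
  also have "\<dots> = n" using assms by simp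
  finally show ?thesis .
qed

lemma lagf_node:
  assumes "n \<ge> 1" "i \<le> n" "j \<le> n"
  shows "lagf n j (eta n i) = (if i = j then 1 else 0)"
proof (cases "i = j")
  case True
  have "lagf n j (eta n i) = (\<Prod>k\<in>{0..n}-{j}. 1)"
    unfolding lagf_def True
  proof (intro prod.cong refl)
    fix k assume "k \<in> {0..n}-{j}"
    then have "eta n j - eta n k \<noteq> 0" using assms eta_inj[OF assms(1), of j k] by auto
    then show "(eta n j - eta n k) / (eta n j - eta n k) = 1" by simp
  qed
  then show ?thesis using True by simp
next
  case False
  then have "i \<in> {0..n}-{j}" using assms by auto
  have "lagf n j (eta n i) = 0" unfolding lagf_def
    by (rule prod_zero) (use \<open>i \<in> {0..n}-{j}\<close> in auto)
  then show ?thesis using False by simp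
qed

lemma interp:
  assumes "n \<ge> 1" "degree p \<le> n"
  shows "poly p t = (\<Sum>j=0..n. poly p (eta n j) * lagf n j t)"
proof -
  define I where "I = (\<Sum>j=0..n. smult (poly p (eta n j)) (lagp n j))"
  have pI: "poly I t = (\<Sum>j=0..n. poly p (eta n j) * lagf n j t)" for t
    unfolding I_def poly_sum by (simp add: poly_lagp)
  have dI: "degree I \<le> n" unfolding I_def
    by (intro degree_sum_le) (auto intro: order.trans[OF degree_smult_le] degree_lagp)
  have "p = I"
  proof (rule poly_eqI_degree[where A = "eta n ` {0..n}"])
    fix x assume "x \<in> eta n ` {0..n}"
    then obtain i where i: "i \<le> n" "x = eta n i" by auto
    have "poly I x = (\<Sum>j=0..n. poly p (eta n j) * (if i = j then 1 else 0))"
      unfolding pI using i assms by (intro sum.cong refl) (simp add: lagf_node)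
    also have "\<dots> = (\<Sum>j=0..n. if i = j then poly p (eta n j) else 0)"
      by (intro sum.cong refl) simp
    also have "\<dots> = poly p x" by (subst sum.delta'[OF finite_atLeastAtMost]) (use i in auto)
    finally show "poly p x = poly I x" by simp
  next
    have "inj_on (eta n) {0..n}"
      by (intro inj_onI) (rule eta_inj[OF assms(1)], auto)
    then have "card (eta n ` {0..n}) = n + 1"
      by (simp add: card_image)
    then show "card (eta n ` {0..n}) > degree p" "card (eta n ` {0..n}) > degree I"
      using assms(2) dI by linarith+
  qed
  then show ?thesis using pI[of t] by (simp only:)
qed

lemma lagf_sign:
  assumes "n \<ge> 1" "j \<le> n" "t \<ge> 1"
  shows "0 \<le> (-1)^j * lagf n j t"
proof -
  define N where "N = (\<Prod>k\<in>{0..n}-{j}. t - eta n k)"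
  define D where "D = (\<Prod>k\<in>{0..n}-{j}. eta n j - eta n k)"
  have L: "lagf n j t = N / D" unfolding lagf_def N_def D_def by (simp add: prod_dividef)
  have N0: "N \<ge> 0" unfolding N_def
  proof (intro prod_nonneg)
    fix k show "0 \<le> t - eta n k" using eta_bnd[of n k] assms(3) by (simp add: abs_le_iff)
  qed
  have sq: "(-1::real)^j * (-1)^j = 1" by (simp flip: power_mult_distrib)
  have split: "{0..n}-{j} = {0..<j} \<union> {j<..n}" using assms by auto
  have D1: "(\<Prod>k\<in>{0..<j}. eta n j - eta n k) = (-1)^j * (\<Prod>k\<in>{0..<j}. eta n k - eta n j)"
  proof -
    have "(\<Prod>k\<in>{0..<j}. eta n j - eta n k) = (\<Prod>k\<in>{0..<j}. (-1) * (eta n k - eta n j))"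
      by (intro prod.cong refl) simp
    also have "\<dots> = (-1)^j * (\<Prod>k\<in>{0..<j}. eta n k - eta n j)"
      by (simp only: prod.distrib prod_constant card_atLeastLessThan diff_zero)
    finally show ?thesis .
  qed
  have P1: "(\<Prod>k\<in>{0..<j}. eta n k - eta n j) > 0"
  proof (intro prod_pos)
    fix k assume "k \<in> {0..<j}"
    then show "0 < eta n k - eta n j" using eta_mono[OF assms(1), of k j] assms(2) by simp
  qed
  have P2: "(\<Prod>k\<in>{j<..n}. eta n j - eta n k) > 0"
  proof (intro prod_pos)
    fix k assume "k \<in> {j<..n}"
    then show "0 < eta n j - eta n k" using eta_mono[OF assms(1), of j k] by simp
  qed
  have DD: "(-1)^j * D = (\<Prod>k\<in>{0..<j}. eta n k - eta n j) * (\<Prod>k\<in>{j<..n}. eta n j - eta n k)"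
  proof -
    have "D = (\<Prod>k\<in>{0..<j}. eta n j - eta n k) * (\<Prod>k\<in>{j<..n}. eta n j - eta n k)"
      unfolding D_def split by (rule prod.union_disjoint) auto
    then show ?thesis using sq by (simp add: D1 mult.assoc[symmetric])
  qed
  have Dp: "(-1)^j * D > 0" unfolding DD using P1 P2 by simp
  have "((-1)^j * lagf n j t) * ((-1)^j * D) = N"
  proof -
    have "D \<noteq> 0" using Dp by auto
    have "((-1)^j * lagf n j t) * ((-1)^j * D) = ((-1)^j * (-1)^j) * (N / D * D)"
      unfolding L by (simp only: ac_simps)
    also have "\<dots> = N" using sq \<open>D \<noteq> 0\<close> by simp
    finally show ?thesis .
  qed
  then have "(-1)^j * lagf n j t = N / ((-1)^j * D)"
  proof -
    have "D \<noteq> 0" using Dp by auto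
    then show ?thesis using \<open>((-1)^j * lagf n j t) * ((-1)^j * D) = N\<close>
      nonzero_mult_div_cancel_right[of "(-1)^j * D" "(-1)^j * lagf n j t"] by simp
  qed
  then show ?thesis using N0 Dp by simp
qed

lemma lag0_ge1:
  assumes "n \<ge> 1" "t \<ge> 1"
  shows "1 \<le> lagf n 0 t"
  unfolding lagf_def eta_0
proof (rule prod_ge_1)
  fix k assume k: "k \<in> {0..n}-{0}"
  then have "eta n k < 1" using eta_mono[OF assms(1), of 0 k] eta_0 by auto
  then show "1 \<le> (t - eta n k) / (1 - eta n k)" using assms by (simp add: field_simps)
qed



lemma abs_lagf: "n \<ge> 1 \<Longrightarrow> j \<le> n \<Longrightarrow> t \<ge> 1 \<Longrightarrow> \<bar>lagf n j t\<bar> = (-1)^j * lagf n j t"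
proof -
  assume a: "n \<ge> 1" "j \<le> n" "t \<ge> 1"
  have "\<bar>lagf n j t\<bar> = \<bar>(-1)^j * lagf n j t\<bar>" by (simp add: abs_mult)
  also have "\<dots> = (-1)^j * lagf n j t" using lagf_sign[OF a] by simp
  finally show ?thesis .
qed

lemma key_bound:
  fixes p :: "real poly"
  assumes n: "n \<ge> 1" and dp: "degree p \<le> n"
    and bnd: "\<And>s. \<bar>s\<bar> \<le> 1 \<Longrightarrow> \<bar>poly p s\<bar> \<le> M" and t: "t \<ge> 1"
  shows "\<bar>poly p t - poly p 1\<bar> \<le> M * (poly (cheb n) t - 1)"
proof -
  have Mb: "\<bar>poly p (eta n j)\<bar> \<le> M" for j using bnd eta_bnd by blast
  have e: "poly p t = poly p 1 * lagf n 0 t + (\<Sum>j=1..n. poly p (eta n j) * lagf n j t)"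
    unfolding interp[OF n dp, of t] using n by (simp add: sum.atLeast_Suc_atMost eta_0)
  have c: "poly (cheb n) t = lagf n 0 t + (\<Sum>j=1..n. (-1)^j * lagf n j t)"
    unfolding interp[OF n cheb_degree, of t] using n
    by (simp add: sum.atLeast_Suc_atMost cheb_eta)
  have "\<bar>poly p t - poly p 1\<bar> = \<bar>poly p 1 * (lagf n 0 t - 1) + (\<Sum>j=1..n. poly p (eta n j) * lagf n j t)\<bar>"
    unfolding e by (simp add: algebra_simps)
  also have "\<dots> \<le> \<bar>poly p 1\<bar> * (lagf n 0 t - 1) + (\<Sum>j=1..n. \<bar>poly p (eta n j)\<bar> * \<bar>lagf n j t\<bar>)"
  proof -
    have "\<bar>poly p 1 * (lagf n 0 t - 1)\<bar> = \<bar>poly p 1\<bar> * (lagf n 0 t - 1)"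
      using lag0_ge1[OF n t] by (simp add: abs_mult)
    moreover have "\<bar>\<Sum>j=1..n. poly p (eta n j) * lagf n j t\<bar> \<le> (\<Sum>j=1..n. \<bar>poly p (eta n j)\<bar> * \<bar>lagf n j t\<bar>)"
      by (rule order.trans[OF sum_abs]) (simp add: abs_mult)
    ultimately show ?thesis by (smt (verit))
  qed
  also have "\<dots> \<le> M * (lagf n 0 t - 1) + (\<Sum>j=1..n. M * ((-1)^j * lagf n j t))"
  proof (intro add_mono sum_mono)
    show "\<bar>poly p 1\<bar> * (lagf n 0 t - 1) \<le> M * (lagf n 0 t - 1)"
      using lag0_ge1[OF n t] Mb[of 0] eta_0[of n] by (intro mult_right_mono) auto
    fix j assume j: "j \<in> {1..n}"
    then have "\<bar>lagf n j t\<bar> = (-1)^j * lagf n j t" using abs_lagf[OF n _ t] by simp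
    then show "\<bar>poly p (eta n j)\<bar> * \<bar>lagf n j t\<bar> \<le> M * ((-1)^j * lagf n j t)"
      using Mb[of j] by (metis abs_ge_zero mult_right_mono)
  qed
  also have "\<dots> = M * (poly (cheb n) t - 1)"
    unfolding c by (simp add: algebra_simps sum_distrib_left)
  finally show ?thesis .
qed

lemma growth_bound:
  fixes p :: "real poly"
  assumes n: "n \<ge> 1" and dp: "degree p \<le> n"
    and bnd: "\<And>s. \<bar>s\<bar> \<le> 1 \<Longrightarrow> \<bar>poly p s\<bar> \<le> M" and t: "t \<ge> 1"
  shows "\<bar>poly p t\<bar> \<le> M * (2 * t) ^ n"
proof -
  have M0: "M \<ge> 0" using bnd[of 0] abs_ge_zero[of "poly p 0"] by simp
  have "\<bar>poly p t\<bar> \<le> \<bar>poly p 1\<bar> + \<bar>poly p t - poly p 1\<bar>" by simp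
  also have "\<dots> \<le> M + M * (poly (cheb n) t - 1)"
    using bnd[of 1] key_bound[OF assms] by simp
  also have "\<dots> = M * poly (cheb n) t" by (simp add: algebra_simps)
  also have "\<dots> \<le> M * (2 * t) ^ n" using cheb_le[OF t] M0 by (simp add: mult_left_mono)
  finally show ?thesis .
qed

lemma markov_end:
  fixes p :: "real poly"
  assumes n: "n \<ge> 1" and dp: "degree p \<le> n"
    and bnd: "\<And>s. \<bar>s\<bar> \<le> 1 \<Longrightarrow> \<bar>poly p s\<bar> \<le> M"
  shows "\<bar>poly (pderiv p) 1\<bar> \<le> M * real n ^ 2"
proof -
  have l1: "((\<lambda>y. (poly p y - poly p 1) / (y - 1)) \<longlongrightarrow> poly (pderiv p) 1) (at_right 1)"
    using poly_DERIV[of p 1] unfolding has_field_derivative_iff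
    by (rule tendsto_mono[OF at_le, rotated]) simp
  have l2: "((\<lambda>y. (poly (cheb n) y - poly (cheb n) 1) / (y - 1)) \<longlongrightarrow> real n ^ 2) (at_right 1)"
    using poly_DERIV[of "cheb n" 1] unfolding has_field_derivative_iff cheb_deriv1
    by (rule tendsto_mono[OF at_le, rotated]) simp
  have ev: "\<forall>\<^sub>F y in at_right 1. \<bar>(poly p y - poly p 1) / (y - 1)\<bar> \<le> M * ((poly (cheb n) y - poly (cheb n) 1) / (y - 1))"
  proof (rule eventually_mono[OF eventually_at_right_less])
    fix y :: real assume y: "1 < y"
    have "\<bar>(poly p y - poly p 1) / (y - 1)\<bar> = \<bar>poly p y - poly p 1\<bar> / (y - 1)"
      using y by (simp add: abs_divide)
    also have "\<dots> \<le> M * (poly (cheb n) y - 1) / (y - 1)"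
      using key_bound[OF n dp bnd, of y] y by (intro divide_right_mono) auto
    finally show "\<bar>(poly p y - poly p 1) / (y - 1)\<bar> \<le> M * ((poly (cheb n) y - poly (cheb n) 1) / (y - 1))"
      by (simp add: cheb_one)
  qed
  show ?thesis
    using tendsto_le[OF trivial_limit_at_right_real tendsto_mult_left[OF l2, of M] tendsto_rabs[OF l1] ev]
    by simp
qed



lemma markov0:
  fixes E :: "real poly"
  assumes m: "m \<ge> 1" and dE: "degree E \<le> m" and H: "H > 0"
    and bnd: "\<And>u. 0 \<le> u \<Longrightarrow> u \<le> H \<Longrightarrow> \<bar>poly E u\<bar> \<le> M"
  shows "\<bar>coeff E 1\<bar> \<le> 2 * real m ^ 2 * M / H"
proof -
  define F where "F = pcompose E [:H/2, -H/2:]"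
  have pF: "poly F w = poly E (H/2 - H/2 * w)" for w
    unfolding F_def poly_pcompose by (simp add: algebra_simps)
  have dF: "degree F \<le> m"
  proof -
    have "degree [:H/2, -H/2:] \<le> 1" by simp
    then have "degree E * degree [:H/2, -H/2:] \<le> m * 1" using dE by (rule mult_le_mono[rotated])
    then show ?thesis unfolding F_def using degree_pcompose_le[of E "[:H/2, -H/2:]"] by simp
  qed
  have bF: "\<bar>poly F w\<bar> \<le> M" if "\<bar>w\<bar> \<le> 1" for w
  proof -
    have w: "-1 \<le> w" "w \<le> 1" using that by (simp_all add: abs_le_iff)
    have e: "H/2 - H/2 * w = H/2 * (1 - w)" by (simp add: algebra_simps)
    have "0 \<le> H/2 * (1 - w)" using H w by simp
    moreover have "H/2 * (1 - w) \<le> H/2 * 2" using H w by (intro mult_left_mono) auto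
    ultimately show ?thesis unfolding pF e by (intro bnd) auto
  qed
  have "\<bar>poly (pderiv F) 1\<bar> \<le> M * real m ^ 2" by (rule markov_end[OF m dF bF])
  moreover have "poly (pderiv F) 1 = coeff E 1 * (- H/2)"
    unfolding F_def pderiv_pcompose by (simp add: poly_pcompose poly_0_coeff_0 coeff_pderiv pderiv_pCons)
  ultimately have "\<bar>coeff E 1\<bar> * (H/2) \<le> M * real m ^ 2" using H by (simp add: abs_mult)
  then show ?thesis using H by (simp add: field_simps)
qed

lemma poly_sum_le:
  fixes q :: "real poly"
  assumes "degree q \<le> n"
  shows "poly q t = (\<Sum>i\<le>n. coeff q i * t ^ i)"
  unfolding poly_altdef
  by (rule sum.mono_neutral_left) (use assms in \<open>auto simp: coeff_eq_0\<close>)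

lemma even_part:
  fixes q :: "real poly"
  assumes dq: "degree q \<le> n"
  shows "\<exists>E. degree E \<le> n div 2 \<and> coeff E 1 = coeff q 2 \<and>
            (\<forall>t. poly E (t^2) = (poly q t + poly q (-t)) / 2)"
proof -
  define E where "E = (\<Sum>k\<le>n div 2. monom (coeff q (2*k)) k)"
  have dE: "degree E \<le> n div 2" unfolding E_def
    by (intro degree_sum_le) (auto intro: order.trans[OF degree_monom_le])
  have cE: "coeff E 1 = coeff q 2"
  proof (cases "n \<ge> 2")
    case True
    have "coeff E 1 = (\<Sum>k\<le>n div 2. if k = 1 then coeff q (2*k) else 0)"
      unfolding E_def coeff_sum by (intro sum.cong refl) (auto simp: coeff_monom)
    also have "\<dots> = coeff q 2" using True by (subst sum.delta) auto
    finally show ?thesis .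
  next
    case False
    then have "coeff q 2 = 0" using dq by (intro coeff_eq_0) auto
    moreover have "coeff E 1 = 0" using dE False by (intro coeff_eq_0) auto
    ultimately show ?thesis by simp
  qed
  have pE: "poly E (t^2) = (poly q t + poly q (-t)) / 2" for t
  proof -
    have "(poly q t + poly q (-t)) / 2 = (\<Sum>i\<le>n. (coeff q i * t ^ i + coeff q i * (-t) ^ i) / 2)"
      unfolding poly_sum_le[OF dq] by (simp only: sum.distrib sum_divide_distrib add_divide_distrib)
    also have "\<dots> = (\<Sum>i\<le>n. (if even i then coeff q i * t ^ i else 0))"
    proof (intro sum.cong refl)
      fix i
      show "(coeff q i * t ^ i + coeff q i * (-t) ^ i) / 2 = (if even i then coeff q i * t ^ i else 0)"
        by (cases "even i") (simp_all add: power_minus[of t i])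
    qed
    also have "\<dots> = (\<Sum>i\<in>{i\<in>{..n}. even i}. coeff q i * t ^ i)"
      by (rule sum.inter_filter[symmetric]) simp
    also have "{i\<in>{..n}. even i} = (\<lambda>k. 2*k) ` {..n div 2}"
    proof (intro set_eqI iffI)
      fix i assume "i \<in> {i\<in>{..n}. even i}"
      then have i: "i \<le> n" "even i" by auto
      then have "i = 2 * (i div 2)" "i div 2 \<le> n div 2" by (auto intro: div_le_mono)
      then show "i \<in> (\<lambda>k. 2*k) ` {..n div 2}" by (intro image_eqI) auto
    next
      fix i assume "i \<in> (\<lambda>k. 2*k) ` {..n div 2}"
      then obtain k where k: "k \<le> n div 2" "i = 2*k" by auto
      then have "2 * k \<le> n" by linarith
      then show "i \<in> {i\<in>{..n}. even i}" using k by auto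
    qed
    also have "(\<Sum>i\<in>(\<lambda>k. 2*k) ` {..n div 2}. coeff q i * t ^ i) = (\<Sum>k\<le>n div 2. coeff q (2*k) * t ^ (2*k))"
      by (subst sum.reindex) (auto simp: inj_on_def)
    also have "\<dots> = poly E (t^2)"
      unfolding E_def poly_sum by (simp add: poly_monom power_mult)
    finally show ?thesis by simp
  qed
  show ?thesis using dE cE pE by blast
qed



lemma line_poly:
  fixes P :: "real^'d \<Rightarrow> real"
  assumes "poly_deg_le n P"
  shows "\<exists>q. degree q \<le> n \<and> (\<forall>t. P (a + t *\<^sub>R v) = poly q t)"
proof -
  define S where "S = {\<alpha>::'d\<Rightarrow>nat. (\<Sum>i\<in>UNIV. \<alpha> i) \<le> n}"
  obtain c where Pc: "\<And>x. P x = (\<Sum>\<alpha>\<in>S. c \<alpha> * (\<Prod>i\<in>UNIV. (x $ i) ^ \<alpha> i))"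
    using assms unfolding poly_deg_le_def S_def by blast
  define q where "q = (\<Sum>\<alpha>\<in>S. smult (c \<alpha>) (\<Prod>i\<in>UNIV. [:a $ i, v $ i:] ^ \<alpha> i))"
  have pq: "P (a + t *\<^sub>R v) = poly q t" for t
    unfolding Pc q_def poly_sum poly_smult poly_prod poly_power
    by (simp add: algebra_simps)
  have dq: "degree q \<le> n"
  proof (cases "finite S")
    case True
    show ?thesis unfolding q_def
    proof (intro degree_sum_le True)
      fix \<alpha> assume "\<alpha> \<in> S"
      then have s: "(\<Sum>i\<in>UNIV. \<alpha> i) \<le> n" unfolding S_def by simp
      have "degree (smult (c \<alpha>) (\<Prod>i\<in>UNIV. [:a $ i, v $ i:] ^ \<alpha> i))
            \<le> degree (\<Prod>i\<in>UNIV. [:a $ i, v $ i:] ^ \<alpha> i)" by (rule degree_smult_le)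
      also have "\<dots> \<le> sum (degree \<circ> (\<lambda>i. [:a $ i, v $ i:] ^ \<alpha> i)) UNIV"
        by (rule degree_prod_sum_le) simp
      also have "\<dots> \<le> (\<Sum>i\<in>UNIV. \<alpha> i)"
      proof (intro sum_mono)
        fix i
        have "degree ([:a $ i, v $ i:] ^ \<alpha> i) \<le> degree [:a $ i, v $ i:] * \<alpha> i"
          by (rule degree_power_le)
        also have "\<dots> \<le> 1 * \<alpha> i" by (intro mult_le_mono) auto
        finally show "(degree \<circ> (\<lambda>i. [:a $ i, v $ i:] ^ \<alpha> i)) i \<le> \<alpha> i" by simp
      qed
      finally show "degree (smult (c \<alpha>) (\<Prod>i\<in>UNIV. [:a $ i, v $ i:] ^ \<alpha> i)) \<le> n"
        using s by linarith
    qed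
  next
    case False
    then show ?thesis unfolding q_def by simp
  qed
  show ?thesis using pq dq by blast
qed

lemma sup_bound:
  fixes P :: "real^'d \<Rightarrow> real"
  assumes "poly_deg_le n P" "y \<in> cball 0 r"
  shows "\<bar>P y\<bar> \<le> sup_norm_ball P r"
proof -
  define S where "S = {\<alpha>::'d\<Rightarrow>nat. (\<Sum>i\<in>UNIV. \<alpha> i) \<le> n}"
  obtain c where Pc: "\<And>x. P x = (\<Sum>\<alpha>\<in>S. c \<alpha> * (\<Prod>i\<in>UNIV. (x $ i) ^ \<alpha> i))"
    using assms unfolding poly_deg_le_def S_def by blast
  have "continuous_on UNIV (\<lambda>x::real^'d. (\<Sum>\<alpha>\<in>S. c \<alpha> * (\<Prod>i\<in>UNIV. (x $ i) ^ \<alpha> i)))"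
    by (intro continuous_intros)
  then have "continuous_on (cball 0 r) (\<lambda>x. \<bar>P x\<bar>)"
    unfolding Pc[abs_def] by (intro continuous_intros)
  then have "compact ((\<lambda>x. \<bar>P x\<bar>) ` cball 0 r)"
    by (intro compact_continuous_image) auto
  then have "bdd_above ((\<lambda>x. \<bar>P x\<bar>) ` cball 0 r)"
    by (intro bounded_imp_bdd_above compact_imp_bounded)
  then show ?thesis unfolding sup_norm_ball_def using assms(2) by (rule cSUP_upper[rotated])
qed

lemma dd2:
  assumes "\<And>t. P (x + t *\<^sub>R \<mu>) = poly q t"
  shows "dir_deriv2 P \<mu> x = 2 * coeff q 2"
proof -
  have f: "(\<lambda>t. P (x + t *\<^sub>R \<mu>)) = poly q" using assms by auto
  have "deriv (poly q) = poly (pderiv q)"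
    by (rule ext, rule DERIV_imp_deriv, rule poly_DERIV)
  moreover have "deriv (poly (pderiv q)) 0 = poly (pderiv (pderiv q)) 0"
    by (rule DERIV_imp_deriv, rule poly_DERIV)
  ultimately show ?thesis unfolding dir_deriv2_def f
    by (simp add: poly_0_coeff_0 coeff_pderiv numeral_2_eq_2)
qed


theorem lemma5:
  fixes P :: "real^'d \<Rightarrow> real" and n :: nat and r :: real
    and \<mu> x :: "real^'d"
  assumes "poly_deg_le n P" and "r > 0" and "norm \<mu> = 1" and "norm x \<ge> r / 4"
  shows "\<bar>dir_deriv2 P \<mu> x\<bar>
           \<le> (8 * norm x / r) ^ n * (8 * real n * (real n - 1) / r^2) * sup_norm_ball P r"
proof -
  note PP = assms(1) and r = assms(2) and mu = assms(3) and xr = assms(4)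
  define M where "M = sup_norm_ball P r"
  define \<rho> where "\<rho> = norm x"
  have \<rho>r: "\<rho> \<ge> r / 4" using xr unfolding \<rho>_def .
  have \<rho>0: "\<rho> > 0" using \<rho>r r by linarith
  have Mb: "\<bar>P y\<bar> \<le> M" if "norm y \<le> r" for y
    unfolding M_def using sup_bound[OF PP, of y r] that by simp
  have M0: "M \<ge> 0" using Mb[of 0] r by (smt (verit) abs_ge_zero norm_zero)
  obtain q where dq: "degree q \<le> n" and pq: "\<And>t. P (x + t *\<^sub>R \<mu>) = poly q t"
    using line_poly[OF PP, of x \<mu>] by blast
  have D: "dir_deriv2 P \<mu> x = 2 * coeff q 2" by (rule dd2) (rule pq)
  show ?thesis
  proof (cases "n \<ge> 2")
    case False
    then have "coeff q 2 = 0" using dq by (intro coeff_eq_0) auto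
    moreover have "8 * real n * (real n - 1) = 0" using False
      by (cases n) (auto simp: less_Suc_eq)
    ultimately show ?thesis unfolding D by (simp only:)
  next
    case True
    have n1: "n \<ge> 1" using True by simp
    define K where "K = (8 * \<rho> / r) ^ n"
    have K1: "K \<ge> 1" unfolding K_def using \<rho>r r by (intro one_le_power) (simp add: field_simps)
    have G: "\<bar>P y\<bar> \<le> M * K" if y4: "norm y \<le> 4 * \<rho>" for y
    proof (cases "norm y \<le> r")
      case True
      then show ?thesis using Mb[OF True] mult_left_mono[OF K1 M0] by simp
    next
      case False
      then have ny: "norm y > r" by simp
      obtain g where dg: "degree g \<le> n" and pg: "\<And>s. P (0 + s *\<^sub>R ((r / norm y) *\<^sub>R y)) = poly g s"
        using line_poly[OF PP, of 0 "(r / norm y) *\<^sub>R y"] by blast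
      have bnd: "\<bar>poly g s\<bar> \<le> M" if "\<bar>s\<bar> \<le> 1" for s
      proof -
        have "norm (s *\<^sub>R ((r / norm y) *\<^sub>R y)) = \<bar>s\<bar> * r"
          using ny r by (auto simp: abs_mult)
        also have "\<dots> \<le> 1 * r" using that r by (intro mult_right_mono) auto
        finally show ?thesis using Mb pg[of s] by (metis add_0 mult_1)
      qed
      have t1: "norm y / r \<ge> 1" using ny r by simp
      have "\<bar>poly g (norm y / r)\<bar> \<le> M * (2 * (norm y / r)) ^ n"
        by (rule growth_bound[OF n1 dg bnd t1])
      moreover have "poly g (norm y / r) = P y"
        using pg[of "norm y / r"] ny r by (cases "y = 0") auto
      moreover have "(2 * (norm y / r)) ^ n \<le> K"
        unfolding K_def using y4 r by (intro power_mono) (auto simp: field_simps)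
      ultimately show ?thesis using M0 by (smt (verit) mult_left_mono)
    qed
    obtain E where dE: "degree E \<le> n div 2" and cE: "coeff E 1 = coeff q 2"
      and pE: "\<And>t. poly E (t^2) = (poly q t + poly q (-t)) / 2"
      using even_part[OF dq] by blast
    define h where "h = 3 * \<rho>"
    have h0: "h > 0" unfolding h_def using \<rho>0 by simp
    have bE: "\<bar>poly E u\<bar> \<le> M * K" if "0 \<le> u" "u \<le> h^2" for u
    proof -
      define s where "s = sqrt u"
      have s0: "0 \<le> s" "s \<le> h" unfolding s_def using that h0
        by (auto simp: real_le_lsqrt)
      have u: "u = s^2" unfolding s_def using that by simp
      have bq: "\<bar>poly q t\<bar> \<le> M * K" if "\<bar>t\<bar> \<le> h" for t
      proof -
        have "norm (x + t *\<^sub>R \<mu>) \<le> norm x + \<bar>t\<bar>"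
          using norm_triangle_ineq[of x "t *\<^sub>R \<mu>"] mu by simp
        also have "\<dots> \<le> 4 * \<rho>" using that unfolding h_def \<rho>_def by simp
        finally show ?thesis using G pq by metis
      qed
      have "\<bar>poly E u\<bar> = \<bar>poly q s + poly q (-s)\<bar> / 2" unfolding u pE by simp
      also have "\<dots> \<le> (M * K + M * K) / 2"
        using bq[of s] bq[of "-s"] s0 by (intro divide_right_mono) (use abs_triangle_ineq[of "poly q s" "poly q (-s)"] in linarith)+
      finally show ?thesis by (simp add: ac_simps)
    qed
    have m1: "n div 2 \<ge> 1" using True by simp
    have ME: "\<bar>coeff E 1\<bar> \<le> 2 * real (n div 2) ^ 2 * (M * K) / h^2"
      by (rule markov0[OF m1 dE _ bE]) (use h0 in auto)
    have m2: "4 * real (n div 2) ^ 2 \<le> real n ^ 2"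
    proof -
      have "real (2 * (n div 2)) \<le> real n" by simp
      then have "real (2 * (n div 2)) ^ 2 \<le> real n ^ 2" by (intro power_mono) auto
      then show ?thesis by (simp add: power_mult_distrib)
    qed
    have "\<bar>dir_deriv2 P \<mu> x\<bar> \<le> 2 * (2 * real (n div 2) ^ 2 * (M * K) / h^2)"
      unfolding D cE[symmetric] using ME by simp
    also have "\<dots> = (4 * real (n div 2) ^ 2) * (M * K) / h^2" by simp
    also have "\<dots> \<le> real n ^ 2 * (M * K) / h^2"
      using m2 M0 K1 by (intro divide_right_mono mult_right_mono) auto
    also have "\<dots> \<le> (8 * real n * (real n - 1) / r^2) * (M * K)"
    proof -
      have "real n ^ 2 * r^2 \<le> 8 * real n * (real n - 1) * h^2"
      proof -
        have "r^2 \<le> (4 * \<rho>)^2" using \<rho>r r by (intro power_mono) auto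
        then have "real n ^ 2 * r^2 \<le> real n ^ 2 * (16 * \<rho>^2)"
          by (intro mult_left_mono) (auto simp: power_mult_distrib)
        also have "\<dots> = (real n ^ 2 * 16) * \<rho>^2" by simp
        also have "\<dots> \<le> (72 * real n * (real n - 1)) * \<rho>^2"
        proof (intro mult_right_mono)
          have "real n \<ge> 2" using True by simp
          then show "real n ^ 2 * 16 \<le> 72 * real n * (real n - 1)"
            by (simp add: power2_eq_square)
        qed auto
        also have "\<dots> = 8 * real n * (real n - 1) * h^2"
          unfolding h_def by (simp add: power_mult_distrib)
        finally show ?thesis by simp
      qed
      note X = this
      have "real n ^ 2 / h^2 = (real n ^ 2 * r^2) / (h^2 * r^2)" using r by simp
      also have "\<dots> \<le> (8 * real n * (real n - 1) * h^2) / (h^2 * r^2)"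
        using X h0 r by (intro divide_right_mono) auto
      also have "\<dots> = 8 * real n * (real n - 1) / r^2" using h0 by simp
      finally have Y: "real n ^ 2 / h^2 \<le> 8 * real n * (real n - 1) / r^2" .
      have MK: "0 \<le> M * K" using M0 K1 by simp
      have "real n ^ 2 * (M * K) / h^2 = (real n ^ 2 / h^2) * (M * K)" by simp
      also have "\<dots> \<le> (8 * real n * (real n - 1) / r^2) * (M * K)"
        by (rule mult_right_mono[OF Y MK])
      finally show ?thesis .
    qed
    also have "\<dots> = (8 * norm x / r) ^ n * (8 * real n * (real n - 1) / r^2) * sup_norm_ball P r"
      unfolding K_def M_def \<rho>_def by (simp add: ac_simps)
    finally show ?thesis .
  qed
qed

end
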